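(* The space $X=\omega^*\times 2^\omega$ (with the product topology) is a compact $nwd$-separable space which is not $d$-separable.
   Context: $\omega^*=\beta\omega\setminus\omega$ is the Čech–Stone remainder of $\omega$, and $2^\omega$ is the Cantor space. A space is $d$-separable if it has a dense subset which is a countable union of discrete subspaces; it is $nwd$-separable if it has a dense subset which is a countable union of nowhere dense subsets. *)

theory Defs
  imports "HOL-Analysis.Analysis"
begin

definition is_ultrafilter_nat :: "nat set set \<Rightarrow> bool" where
  "is_ultrafilter_nat U \<longleftrightarrow>
     UNIV \<in> U \<and> {} \<notin> U \<and>
     (\<forall>A B. A \<in> U \<and> A \<subseteq> B \<longrightarrow> B \<in> U) \<and>
     (\<forall>A B. A \<in> U \<and> B \<in> U \<longrightarrow> A \<inter> B \<in> U) \<and>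
     (\<forall>A. A \<in> U \<or> - A \<in> U)"

text \<open>beta omega: the Stone space of ultrafilters on nat, with basic open sets
  {U. A \<in> U}; omega is embedded via principal ultrafilters.\<close>
definition beta_omega :: "nat set set topology" where
  "beta_omega = topology_generated_by
     {{U. is_ultrafilter_nat U \<and> A \<in> U} | A. True}"

text \<open>omega* = beta omega minus omega, i.e. the free (non-principal) ultrafilters.\<close>
definition omega_star :: "nat set set topology" where
  "omega_star = subtopology beta_omega
     {U. is_ultrafilter_nat U \<and> (\<forall>n. {n} \<notin> U)}"

definition cantor_space :: "(nat \<Rightarrow> bool) topology" where
  "cantor_space = product_topology (\<lambda>_. discrete_topology (UNIV :: bool set)) UNIV"

definition nowhere_dense_in :: "'a topology \<Rightarrow> 'a set \<Rightarrow> bool" where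
  "nowhere_dense_in X A \<longleftrightarrow> A \<subseteq> topspace X \<and> X interior_of (X closure_of A) = {}"

definition discrete_subspace :: "'a topology \<Rightarrow> 'a set \<Rightarrow> bool" where
  "discrete_subspace X A \<longleftrightarrow> A \<subseteq> topspace X \<and> subtopology X A = discrete_topology A"

definition d_separable :: "'a topology \<Rightarrow> bool" where
  "d_separable X \<longleftrightarrow> (\<exists>D :: nat \<Rightarrow> 'a set.
      (\<forall>n. discrete_subspace X (D n)) \<and> X closure_of (\<Union>n. D n) = topspace X)"

definition nwd_separable :: "'a topology \<Rightarrow> bool" where
  "nwd_separable X \<longleftrightarrow> (\<exists>D :: nat \<Rightarrow> 'a set.
      (\<forall>n. nowhere_dense_in X (D n)) \<and> X closure_of (\<Union>n. D n) = topspace X)"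

end

theory Submission
  imports Defs "HOL-Library.Countable"
begin

abbreviation "uf \<equiv> is_ultrafilter_nat"
definition "free U \<longleftrightarrow> (\<forall>n. {n} \<notin> U)"
definition "FO A = {U. uf U \<and> free U \<and> A \<in> U}"
definition "fip G \<longleftrightarrow> (\<forall>F. finite F \<and> F \<subseteq> G \<longrightarrow> infinite (\<Inter>F))"

lemma uf_Inter:
  assumes "uf U" "finite F" "F \<subseteq> U" shows "\<Inter>F \<in> U"
  using assms(2,3)
proof (induction F rule: finite_induct)
  case empty then show ?case using assms(1) by (simp add: is_ultrafilter_nat_def)
next
  case (insert x F) then show ?case using assms(1) by (simp add: is_ultrafilter_nat_def)
qed

lemma uf_free_cofinite:
  assumes "uf U" "free U" "finite F" shows "- F \<in> U"
  using assms(3)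
proof (induction F rule: finite_induct)
  case empty then show ?case using assms(1) by (simp add: is_ultrafilter_nat_def)
next
  case (insert x F)
  have "- {x} \<in> U" using assms unfolding is_ultrafilter_nat_def free_def by blast
  then have "- {x} \<inter> - F \<in> U" using insert assms(1) by (simp add: is_ultrafilter_nat_def)
  moreover have "- (insert x F) = - {x} \<inter> - F" by blast
  ultimately show ?case by simp
qed

lemma uf_free_infinite:
  assumes "uf U" "free U" "A \<in> U" shows "infinite A"
proof
  assume "finite A"
  then have "- A \<in> U" using uf_free_cofinite assms by blast
  then show False using assms(1,3) unfolding is_ultrafilter_nat_def by (metis Compl_disjoint)
qed

lemma uf_not_both:
  assumes "uf U" "A \<in> U" "B \<in> U" "A \<inter> B = {}" shows False
  using assms unfolding is_ultrafilter_nat_def by metis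

lemma chain_fin:
  assumes ch: "chain\<^sub>\<subseteq> C" and "finite F" "F \<noteq> {}" "F \<subseteq> \<Union>C"
  shows "\<exists>X\<in>C. F \<subseteq> X"
  using assms(2,3,4)
proof (induction F rule: finite_ne_induct)
  case (singleton x) then show ?case by auto
next
  case (insert x F)
  then obtain X where X: "X \<in> C" "F \<subseteq> X" by auto
  obtain Y where Y: "Y \<in> C" "x \<in> Y" using insert by auto
  have "X \<subseteq> Y \<or> Y \<subseteq> X" using ch X(1) Y(1) unfolding chain_subset_def by blast
  then show ?case
  proof
    assume "X \<subseteq> Y" then show ?case using X Y by blast
  next
    assume "Y \<subseteq> X" then show ?case using X Y by blast
  qed
qed

lemma fip_ext:
  assumes "fip G" shows "\<exists>U. uf U \<and> free U \<and> G \<subseteq> U"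
proof -
  define \<A> where "\<A> = {H. G \<subseteq> H \<and> fip H}"
  have "\<exists>M\<in>\<A>. \<forall>X\<in>\<A>. M \<subseteq> X \<longrightarrow> X = M"
  proof (rule Zorn_Lemma2, intro ballI)
    fix C assume C: "C \<in> chains \<A>"
    show "\<exists>U\<in>\<A>. \<forall>X\<in>C. X \<subseteq> U"
    proof (cases "C = {}")
      case True then show ?thesis using assms by (auto simp: \<A>_def)
    next
      case False
      have "\<Union>C \<in> \<A>"
        unfolding \<A>_def fip_def
      proof (intro CollectI conjI allI impI)
        show "G \<subseteq> \<Union>C" using False C by (auto simp: chains_def \<A>_def)
        fix F assume F: "finite F \<and> F \<subseteq> \<Union>C"
        have "\<exists>X\<in>C. F \<subseteq> X"
        proof (cases "F = {}")
          case True then show ?thesis using False by blast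
        next
          case nF: False
          have ch: "chain\<^sub>\<subseteq> C" using C by (simp add: chains_def)
          show ?thesis using chain_fin[OF ch conjunct1[OF F] nF conjunct2[OF F]] .
        qed
        then obtain X where "X \<in> C" "F \<subseteq> X" by blast
        then have "fip X" using C by (auto simp: chains_def \<A>_def)
        then show "infinite (\<Inter>F)" using F \<open>F \<subseteq> X\<close> unfolding fip_def by blast
      qed
      then show ?thesis by blast
    qed
  qed
  then obtain M where MA: "M \<in> \<A>" and MX: "\<forall>X\<in>\<A>. M \<subseteq> X \<longrightarrow> X = M" by blast
  have M: "G \<subseteq> M" "fip M" using MA by (simp_all add: \<A>_def)
  have max: "X = M" if "G \<subseteq> X" "fip X" "M \<subseteq> X" for X
  proof -
    have "X \<in> \<A>" using that by (simp add: \<A>_def)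
    then show ?thesis using MX that(3) by blast
  qed
  have add: "B \<in> M" if "fip (insert B M)" for B
    using max[of "insert B M"] that M by blast
  have fipI: "fip (insert B M)" if h: "\<And>F. finite F \<Longrightarrow> F \<subseteq> M \<Longrightarrow> infinite (B \<inter> \<Inter>F)" for B
    unfolding fip_def
  proof (intro allI impI)
    fix F assume F: "finite F \<and> F \<subseteq> insert B M"
    show "infinite (\<Inter>F)"
    proof (cases "B \<in> F")
      case True
      have "finite (F - {B})" "F - {B} \<subseteq> M" using F by auto
      then have "infinite (B \<inter> \<Inter>(F - {B}))" using h by blast
      moreover have "B \<inter> \<Inter>(F - {B}) = \<Inter>F" using True by blast
      ultimately show ?thesis by simp
    next
      case False
      then have "F \<subseteq> M" using F by blast
      then show ?thesis using F M(2) unfolding fip_def by blast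
    qed
  qed
  have Mfin: "infinite (\<Inter>F)" if "finite F" "F \<subseteq> M" for F using M(2) that unfolding fip_def by blast
  have up: "B \<in> M" if "A \<in> M" "A \<subseteq> B" for A B
  proof (rule add, rule fipI)
    fix F assume "finite F" "F \<subseteq> M"
    then have "infinite (\<Inter>(insert A F))" using Mfin[of "insert A F"] that by simp
    moreover have "\<Inter>(insert A F) \<subseteq> B \<inter> \<Inter>F" using that by auto
    ultimately show "infinite (B \<inter> \<Inter>F)" using infinite_super by blast
  qed
  have int: "A \<inter> B \<in> M" if "A \<in> M" "B \<in> M" for A B
  proof (rule add, rule fipI)
    fix F assume "finite F" "F \<subseteq> M"
    then have "infinite (\<Inter>(insert A (insert B F)))" using Mfin[of "insert A (insert B F)"] that by simp
    then show "infinite (A \<inter> B \<inter> \<Inter>F)" by (simp add: Int_assoc)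
  qed
  have compl: "A \<in> M \<or> - A \<in> M" for A
  proof (rule ccontr)
    assume "\<not> (A \<in> M \<or> - A \<in> M)"
    then have n1: "\<not> fip (insert A M)" and n2: "\<not> fip (insert (- A) M)" using add by blast+
    obtain F1 where F1: "finite F1" "F1 \<subseteq> M" "finite (A \<inter> \<Inter>F1)"
      using fipI[of A] n1 by blast
    obtain F2 where F2: "finite F2" "F2 \<subseteq> M" "finite (- A \<inter> \<Inter>F2)"
      using fipI[of "- A"] n2 by blast
    have "\<Inter>(F1 \<union> F2) \<subseteq> (A \<inter> \<Inter>F1) \<union> (- A \<inter> \<Inter>F2)" by auto
    then have "finite (\<Inter>(F1 \<union> F2))" using F1 F2 by (meson finite_UnI finite_subset)
    moreover have "finite (F1 \<union> F2)" "F1 \<union> F2 \<subseteq> M" using F1 F2 by auto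
    ultimately show False using Mfin[of "F1 \<union> F2"] by blast
  qed
  have univ: "UNIV \<in> M" using compl up by blast
  have empty: "{} \<notin> M" using Mfin[of "{{}}"] by auto
  have fr: "free M" unfolding free_def
  proof
    fix n show "{n} \<notin> M" using Mfin[of "{{n}}"] by auto
  qed
  have "uf M" unfolding is_ultrafilter_nat_def using univ empty up int compl by blast
  then show ?thesis using fr M by blast
qed

lemma FO_nonempty: "infinite A \<Longrightarrow> FO A \<noteq> {}"
proof -
  assume "infinite A"
  have "fip {A}" unfolding fip_def
  proof (intro allI impI)
    fix F :: "nat set set" assume "finite F \<and> F \<subseteq> {A}"
    then have "F = {} \<or> F = {A}" by (meson subset_singletonD)
    then show "infinite (\<Inter>F)" using \<open>infinite A\<close> by auto
  qed
  then obtain U where "uf U" "free U" "{A} \<subseteq> U" using fip_ext by blast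
  then have "U \<in> FO A" unfolding FO_def by simp
  then show ?thesis by blast
qed

definition "Free = {U. uf U \<and> free U}"
definition "BO A = {U. uf U \<and> A \<in> U}"

lemma omega_star_alt: "omega_star = subtopology beta_omega Free"
  unfolding omega_star_def Free_def free_def by simp

lemma uf_up: "uf U \<Longrightarrow> A \<in> U \<Longrightarrow> A \<subseteq> B \<Longrightarrow> B \<in> U"
  unfolding is_ultrafilter_nat_def by blast
lemma uf_int: "uf U \<Longrightarrow> A \<in> U \<Longrightarrow> B \<in> U \<Longrightarrow> A \<inter> B \<in> U"
  unfolding is_ultrafilter_nat_def by blast
lemma uf_compl: "uf U \<Longrightarrow> A \<in> U \<or> - A \<in> U"
  unfolding is_ultrafilter_nat_def by blast
lemma uf_UNIV: "uf U \<Longrightarrow> UNIV \<in> U"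
  unfolding is_ultrafilter_nat_def by blast
lemma uf_empty: "uf U \<Longrightarrow> {} \<notin> U"
  unfolding is_ultrafilter_nat_def by blast

lemma uf_compl_not: "uf U \<Longrightarrow> A \<in> U \<Longrightarrow> - A \<in> U \<Longrightarrow> False"
  unfolding is_ultrafilter_nat_def by (metis Compl_disjoint)

lemma gen_open:
  assumes "generate_topology_on {{U. uf U \<and> A \<in> U} | A. True} S"
  shows "\<forall>U\<in>S. uf U \<and> (\<exists>A\<in>U. BO A \<subseteq> S)"
  using assms
proof (induction rule: generate_topology_on.induct)
  case Empty then show ?case by simp
next
  case (Int a b)
  show ?case
  proof
    fix U assume U: "U \<in> a \<inter> b"
    then obtain A B where "A \<in> U" "BO A \<subseteq> a" "B \<in> U" "BO B \<subseteq> b" "uf U" using Int.IH by blast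
    moreover have "BO (A \<inter> B) \<subseteq> BO A" "BO (A \<inter> B) \<subseteq> BO B"
      unfolding BO_def using uf_up by blast+
    ultimately have "A \<inter> B \<in> U" "BO (A \<inter> B) \<subseteq> a \<inter> b" "uf U" using uf_int by auto
    then show "uf U \<and> (\<exists>A\<in>U. BO A \<subseteq> a \<inter> b)" by blast
  qed
next
  case (UN K)
  show ?case
  proof
    fix U assume "U \<in> \<Union>K"
    then obtain k where "k \<in> K" "U \<in> k" by blast
    then have "uf U \<and> (\<exists>A\<in>U. BO A \<subseteq> k)" using UN.IH by blast
    then obtain A where "uf U" "A \<in> U" "BO A \<subseteq> k" by blast
    then show "uf U \<and> (\<exists>A\<in>U. BO A \<subseteq> \<Union>K)" using \<open>k \<in> K\<close> by blast
  qed
next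
  case (Basis s)
  then obtain A where "s = {U. uf U \<and> A \<in> U}" by auto
  then have "s = BO A" unfolding BO_def by simp
  then show ?case unfolding BO_def by auto
qed

lemma topspace_beta: "topspace beta_omega = {U. uf U}"
  unfolding beta_omega_def topology_generated_by_topspace
proof
  show "\<Union> {{U. uf U \<and> A \<in> U} | A. True} \<subseteq> {U. uf U}" by blast
  show "{U. uf U} \<subseteq> \<Union> {{U. uf U \<and> A \<in> U} | A. True}"
  proof
    fix U assume "U \<in> {U. uf U}"
    then have "U \<in> {V. uf V \<and> UNIV \<in> V}" using uf_UNIV by blast
    then show "U \<in> \<Union> {{U. uf U \<and> A \<in> U} | A. True}" by blast
  qed
qed

lemma topspace_omega_star: "topspace omega_star = Free"
  unfolding omega_star_alt topspace_subtopology topspace_beta Free_def by blast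

lemma FO_eq: "FO A = BO A \<inter> Free"
  unfolding FO_def BO_def Free_def by blast

lemma open_BO: "openin beta_omega (BO A)"
  unfolding beta_omega_def openin_topology_generated_by_iff
  by (rule generate_topology_on.Basis) (auto simp: BO_def)

lemma open_FO: "openin omega_star (FO A)"
  unfolding omega_star_alt openin_subtopology FO_eq using open_BO by blast

lemma open_FO_basis:
  assumes "openin omega_star S" "U \<in> S" shows "\<exists>A\<in>U. FO A \<subseteq> S"
proof -
  obtain T where T: "openin beta_omega T" "S = T \<inter> Free"
    using assms(1) unfolding omega_star_alt openin_subtopology by blast
  have "generate_topology_on {{U. uf U \<and> A \<in> U} | A. True} T"
    using T(1) unfolding beta_omega_def openin_topology_generated_by_iff .
  then have "\<forall>U\<in>T. uf U \<and> (\<exists>A\<in>U. BO A \<subseteq> T)" by (rule gen_open)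
  then obtain A where "A \<in> U" "BO A \<subseteq> T" using assms(2) T(2) by blast
  then show ?thesis using T(2) FO_eq by blast
qed

lemma FO_mono: "A \<subseteq> B \<Longrightarrow> FO A \<subseteq> FO B"
  unfolding FO_def using uf_up by blast

lemma compact_omega_star: "compact_space omega_star"
  unfolding compact_space_alt topspace_omega_star
proof (intro allI impI)
  fix \<U> assume cov: "(\<forall>W\<in>\<U>. openin omega_star W) \<and> Free \<subseteq> \<Union>\<U>"
  have ex: "\<forall>V\<in>Free. \<exists>p. fst p \<in> \<U> \<and> snd p \<in> V \<and> FO (snd p) \<subseteq> fst p"
  proof
    fix V assume "V \<in> Free"
    then obtain W where W: "W \<in> \<U>" "V \<in> W" using cov by blast
    then have "openin omega_star W" using cov by blast
    then obtain A where "A \<in> V" "FO A \<subseteq> W" using open_FO_basis W(2) by blast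
    then show "\<exists>p. fst p \<in> \<U> \<and> snd p \<in> V \<and> FO (snd p) \<subseteq> fst p" using W
      by (intro exI[of _ "(W, A)"]) simp
  qed
  obtain f where f: "\<And>V. V \<in> Free \<Longrightarrow> fst (f V) \<in> \<U> \<and> snd (f V) \<in> V \<and> FO (snd (f V)) \<subseteq> fst (f V)"
  proof -
    from bchoice[OF ex] obtain f where "\<forall>V\<in>Free. fst (f V) \<in> \<U> \<and> snd (f V) \<in> V \<and> FO (snd (f V)) \<subseteq> fst (f V)" ..
    then show ?thesis using that by blast
  qed
  define w where "w = (\<lambda>V. fst (f V))"
  define a where "a = (\<lambda>V. snd (f V))"
  have wa: "w V \<in> \<U> \<and> a V \<in> V \<and> FO (a V) \<subseteq> w V" if "V \<in> Free" for V
    unfolding w_def a_def using f[OF that] .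
  define G where "G = (\<lambda>V. - a V) ` Free"
  show "\<exists>\<F>. finite \<F> \<and> \<F> \<subseteq> \<U> \<and> Free \<subseteq> \<Union>\<F>"
  proof (cases "fip G")
    case True
    then obtain Z where Z: "uf Z" "free Z" "G \<subseteq> Z" using fip_ext by blast
    then have ZF: "Z \<in> Free" unfolding Free_def by simp
    then have "- a Z \<in> G" unfolding G_def by (rule imageI)
    then have "a Z \<in> Z" "- a Z \<in> Z" using wa[OF ZF] Z(3) by auto
    then have False using uf_compl_not[OF Z(1)] by blast
    then show ?thesis ..
  next
    case False
    then obtain F where F: "finite F" "F \<subseteq> G" "finite (\<Inter>F)" unfolding fip_def by blast
    then obtain S where S: "S \<subseteq> Free" "finite S" "F = (\<lambda>V. - a V) ` S"
      using finite_subset_image[OF F(1) F(2)[unfolded G_def]] by blast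
    have "Free \<subseteq> \<Union>(w ` S)"
    proof
      fix Z assume Z: "Z \<in> Free"
      then have Zu: "uf Z" "free Z" unfolding Free_def by auto
      have "\<exists>V\<in>S. a V \<in> Z"
      proof (rule ccontr)
        assume na: "\<not> (\<exists>V\<in>S. a V \<in> Z)"
        have "F \<subseteq> Z"
        proof
          fix X assume "X \<in> F"
          then obtain V where "V \<in> S" "X = - a V" using S(3) by blast
          then show "X \<in> Z" using na uf_compl[OF Zu(1), of "a V"] by blast
        qed
        then have "\<Inter>F \<in> Z" using uf_Inter[OF Zu(1) F(1)] by blast
        moreover have "- \<Inter>F \<in> Z" using uf_free_cofinite[OF Zu F(3)] .
        ultimately show False using uf_compl_not[OF Zu(1)] by blast
      qed
      then obtain V where V: "V \<in> S" "a V \<in> Z" by blast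
      then have "Z \<in> FO (a V)" using Zu unfolding FO_def by simp
      moreover have "FO (a V) \<subseteq> w V" using wa V(1) S(1) by blast
      ultimately show "Z \<in> \<Union>(w ` S)" using V(1) by blast
    qed
    moreover have "w ` S \<subseteq> \<U>" using wa S(1) by blast
    ultimately show ?thesis using S(2) by blast
  qed
qed

lemma FO_almost:
  assumes "finite (B - A)" shows "FO B \<subseteq> FO A"
proof
  fix U assume U: "U \<in> FO B"
  then have u: "uf U" "free U" "B \<in> U" unfolding FO_def by auto
  have "- (B - A) \<in> U" using uf_free_cofinite[OF u(1,2) assms] .
  then have "B \<inter> - (B - A) \<in> U" using uf_int[OF u(1) u(3)] by blast
  moreover have "B \<inter> - (B - A) \<subseteq> A" by blast
  ultimately have "A \<in> U" using uf_up[OF u(1)] by blast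
  then show "U \<in> FO A" using u unfolding FO_def by simp
qed

lemma pseudo:
  fixes A :: "nat \<Rightarrow> nat set"
  assumes dec: "\<And>k. A (Suc k) \<subseteq> A k" and inf: "\<And>k. infinite (A k)"
  shows "\<exists>B. infinite B \<and> (\<forall>k. finite (B - A k))"
proof -
  have ex: "\<exists>x. x \<in> A k \<and> m < x" for k m
    using inf[of k] unfolding infinite_nat_iff_unbounded by blast
  define a where "a = rec_nat (SOME x. x \<in> A 0) (\<lambda>k y. SOME x. x \<in> A (Suc k) \<and> y < x)"
  have a0: "a 0 = (SOME x. x \<in> A 0)" unfolding a_def by simp
  have aS: "a (Suc k) = (SOME x. x \<in> A (Suc k) \<and> a k < x)" for k unfolding a_def by simp
  have both: "a (Suc k) \<in> A (Suc k) \<and> a k < a (Suc k)" for k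
    unfolding aS by (rule someI_ex) (rule ex)
  have a0': "a 0 \<in> A 0"
    unfolding a0 by (rule someI_ex) (use ex[of 0 0] in blast)
  have ain: "a k \<in> A k" for k
    using a0' both by (cases k) auto
  have alt: "a k < a (Suc k)" for k
    using both by blast
  have sm: "strict_mono a" using alt by (simp add: strict_mono_Suc_iff)
  have mono: "A j \<subseteq> A k" if "k \<le> j" for j k
    using that
  proof (induction j)
    case 0 then show ?case by simp
  next
    case (Suc j)
    show ?case
    proof (cases "k = Suc j")
      case True then show ?thesis by simp
    next
      case False then have "k \<le> j" using Suc.prems by simp
      then show ?thesis using Suc.IH dec[of j] by blast
    qed
  qed
  have fin: "finite (range a - A k)" for k
  proof -
    have "range a - A k \<subseteq> a ` {..<k}"
    proof
      fix x assume "x \<in> range a - A k"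
      then obtain j where j: "x = a j" "x \<notin> A k" by blast
      have "j < k"
      proof (rule ccontr)
        assume "\<not> j < k"
        then have "A j \<subseteq> A k" using mono by simp
        then show False using ain[of j] j by blast
      qed
      then show "x \<in> a ` {..<k}" using j by blast
    qed
    then show ?thesis using finite_subset by blast
  qed
  have "infinite (range a)" using range_inj_infinite[OF strict_mono_imp_inj_on[OF sm]] .
  then show ?thesis using fin by blast
qed

definition "small P \<longleftrightarrow> (\<forall>A. infinite A \<longrightarrow> (\<exists>B\<subseteq>A. infinite B \<and> FO B \<inter> P = {}))"

lemma small_union:
  fixes P :: "nat \<Rightarrow> nat set set set"
  assumes sm: "\<And>k. small (P k)"
  shows "\<exists>B. infinite B \<and> (\<forall>k. FO B \<inter> P k = {})"
proof -
  have step: "\<exists>B. B \<subseteq> X \<and> infinite B \<and> FO B \<inter> P k = {}" if "infinite X" for X k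
    using sm[of k] that unfolding small_def by blast
  define A where "A = rec_nat (UNIV :: nat set) (\<lambda>k X. SOME B. B \<subseteq> X \<and> infinite B \<and> FO B \<inter> P k = {})"
  have A0: "A 0 = UNIV" unfolding A_def by simp
  have AS: "A (Suc k) = (SOME B. B \<subseteq> A k \<and> infinite B \<and> FO B \<inter> P k = {})" for k
    unfolding A_def by simp
  have inf: "infinite (A k)" for k
  proof (induction k)
    case 0 then show ?case using A0 by simp
  next
    case (Suc k)
    have "A (Suc k) \<subseteq> A k \<and> infinite (A (Suc k)) \<and> FO (A (Suc k)) \<inter> P k = {}"
      unfolding AS by (rule someI_ex) (rule step[OF Suc.IH])
    then show ?case by blast
  qed
  have props: "A (Suc k) \<subseteq> A k \<and> FO (A (Suc k)) \<inter> P k = {}" for k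
  proof -
    have "A (Suc k) \<subseteq> A k \<and> infinite (A (Suc k)) \<and> FO (A (Suc k)) \<inter> P k = {}"
      unfolding AS by (rule someI_ex) (rule step[OF inf[of k]])
    then show ?thesis by blast
  qed
  obtain B where B: "infinite B" "\<And>k. finite (B - A k)"
    using pseudo[of A] props inf by blast
  have "FO B \<inter> P k = {}" for k
  proof -
    have "FO B \<subseteq> FO (A (Suc k))" using FO_almost B(2) by blast
    then show ?thesis using props[of k] by blast
  qed
  then show ?thesis using B(1) by blast
qed

lemma split_not_in:
  assumes S: "infinite S" and U: "uf U"
  shows "\<exists>B\<subseteq>S. infinite B \<and> B \<notin> U"
proof -
  define e where "e = enumerate S"
  have sm: "strict_mono e" unfolding e_def using S by (simp add: strict_mono_def enumerate_mono)
  have inj: "inj e" using strict_mono_imp_inj_on[OF sm] .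
  define E where "E = range (\<lambda>n. e (2 * n))"
  define F where "F = range (\<lambda>n. e (2 * n + 1))"
  have "inj (\<lambda>n. e (2 * n))"
  proof (rule injI)
    fix x y assume "e (2 * x) = e (2 * y)"
    then have "2 * x = 2 * y" using inj by (simp add: inj_eq)
    then show "x = y" by simp
  qed
  then have iE: "infinite E" unfolding E_def by (rule range_inj_infinite)
  have "inj (\<lambda>n. e (2 * n + 1))"
  proof (rule injI)
    fix x y assume "e (2 * x + 1) = e (2 * y + 1)"
    then have "2 * x + 1 = 2 * y + 1" using inj by (simp add: inj_eq)
    then show "x = y" by simp
  qed
  then have iF: "infinite F" unfolding F_def by (rule range_inj_infinite)
  have sub: "E \<subseteq> S" "F \<subseteq> S" unfolding E_def F_def e_def using enumerate_in_set[OF S] by auto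
  have disj: "E \<inter> F = {}"
  proof (rule ccontr)
    assume "E \<inter> F \<noteq> {}"
    then obtain n m where "e (2 * n) = e (2 * m + 1)" unfolding E_def F_def by auto
    then have "2 * n = 2 * m + 1" using inj by (simp add: inj_eq)
    then show False by presburger
  qed
  have "E \<notin> U \<or> F \<notin> U"
  proof (rule ccontr)
    assume "\<not> (E \<notin> U \<or> F \<notin> U)"
    then have "E \<inter> F \<in> U" using uf_int[OF U] by blast
    then show False using uf_empty[OF U] disj by simp
  qed
  then show ?thesis using iE iF sub by blast
qed

definition cyl :: "bool list \<Rightarrow> (nat \<Rightarrow> bool) set" where
  "cyl l = {c. \<forall>i<length l. c i = l ! i}"

definition qq :: "bool list \<Rightarrow> nat \<Rightarrow> bool" where
  "qq l = (\<lambda>i. if i < length l then l ! i else False)"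

lemma qq_cyl: "qq l \<in> cyl l"
  unfolding qq_def cyl_def by simp

lemma topspace_cantor: "topspace cantor_space = UNIV"
  unfolding cantor_space_def by simp

lemma open_cyl: "openin cantor_space (cyl l)"
  unfolding cantor_space_def openin_product_topology_alt
proof
  fix x assume x: "x \<in> cyl l"
  define U where "U = (\<lambda>i. if i < length l then {l ! i} else (UNIV :: bool set))"
  have "{i \<in> UNIV. U i \<noteq> topspace (discrete_topology UNIV)} \<subseteq> {..<length l}"
    unfolding U_def by auto
  then have "finite {i \<in> UNIV. U i \<noteq> topspace (discrete_topology UNIV)}"
    using finite_subset by blast
  moreover have "x \<in> Pi\<^sub>E UNIV U" using x unfolding U_def cyl_def by (auto simp: PiE_iff)
  moreover have "Pi\<^sub>E UNIV U \<subseteq> cyl l"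
  proof
    fix y assume y: "y \<in> Pi\<^sub>E UNIV U"
    have "y i = l ! i" if "i < length l" for i
    proof -
      have "y i \<in> U i" using y by (auto simp: PiE_iff)
      then have "y i \<in> {l ! i}" using that unfolding U_def by simp
      then show ?thesis by simp
    qed
    then show "y \<in> cyl l" unfolding cyl_def by simp
  qed
  ultimately show "\<exists>U. finite {i \<in> UNIV. U i \<noteq> topspace (discrete_topology UNIV)} \<and>
                 (\<forall>i \<in> UNIV. openin (discrete_topology UNIV) (U i)) \<and> x \<in> Pi\<^sub>E UNIV U \<and> Pi\<^sub>E UNIV U \<subseteq> cyl l"
    by auto
qed

lemma cyl_basis:
  assumes "openin cantor_space W" "c \<in> W"
  shows "\<exists>l. c \<in> cyl l \<and> cyl l \<subseteq> W"
proof -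
  obtain U where U: "finite {i \<in> UNIV. U i \<noteq> topspace (discrete_topology (UNIV::bool set))}"
    "c \<in> Pi\<^sub>E UNIV U" "Pi\<^sub>E UNIV U \<subseteq> W"
    using assms unfolding cantor_space_def openin_product_topology_alt by blast
  obtain N where N: "{i \<in> UNIV. U i \<noteq> topspace (discrete_topology (UNIV::bool set))} \<subseteq> {..<N}"
    using finite_nat_bounded[OF U(1)] by blast
  define l where "l = map c [0..<N]"
  have "c \<in> cyl l" unfolding l_def cyl_def by simp
  moreover have "cyl l \<subseteq> Pi\<^sub>E UNIV U"
  proof
    fix y assume y: "y \<in> cyl l"
    have "y i \<in> U i" for i
    proof (cases "i < N")
      case True
      then have "y i = c i" using y unfolding cyl_def l_def by auto
      then show ?thesis using U(2) by (auto simp: PiE_iff)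
    next
      case False
      then have "U i = UNIV" using N by auto
      then show ?thesis by simp
    qed
    then show "y \<in> Pi\<^sub>E UNIV U" by (auto simp: PiE_iff)
  qed
  ultimately show ?thesis using U(3) by blast
qed

lemma cyl_snoc: "cyl (l @ [b]) \<subseteq> cyl l"
  unfolding cyl_def by (auto simp: nth_append)

lemma compact_cantor: "compact_space cantor_space"
  unfolding cantor_space_def compact_space_product_topology
  by (simp add: compact_space_discrete_topology)

abbreviation "XX \<equiv> prod_topology omega_star cantor_space"

lemma topspace_XX: "topspace XX = Free \<times> UNIV"
  by (simp add: topspace_omega_star topspace_cantor)

lemma closure_pt:
  assumes "x \<in> X closure_of S" "openin X T" "x \<in> T"
  shows "\<exists>y. y \<in> S \<and> y \<in> T"
  using assms by (auto simp: in_closure_of)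

lemma box_basis:
  assumes "openin XX T" "(u, c) \<in> T"
  shows "\<exists>A l. A \<in> u \<and> c \<in> cyl l \<and> FO A \<times> cyl l \<subseteq> T"
proof -
  have "\<exists>U V. openin omega_star U \<and> openin cantor_space V \<and> u \<in> U \<and> c \<in> V \<and> U \<times> V \<subseteq> T"
    using openin_prod_topology_alt[THEN iffD1, OF assms(1), rule_format, OF assms(2)] .
  then obtain U V where UV: "openin omega_star U" "openin cantor_space V" "u \<in> U" "c \<in> V" "U \<times> V \<subseteq> T"
    by blast
  obtain A where A: "A \<in> u" "FO A \<subseteq> U" using open_FO_basis[OF UV(1,3)] by blast
  obtain l where l: "c \<in> cyl l" "cyl l \<subseteq> V" using cyl_basis[OF UV(2,4)] by blast
  have "FO A \<times> cyl l \<subseteq> U \<times> V" using A(2) l(2) by blast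
  then show ?thesis using A(1) l(1) UV(5) by blast
qed

lemma open_box: "openin XX (FO A \<times> cyl l)"
  using open_FO[of A] open_cyl[of l] by (simp add: openin_prod_Times_iff)

lemma part_compact: "compact_space XX"
  using compact_omega_star compact_cantor by (simp add: compact_space_prod_topology)

lemma part_nwd: "nwd_separable XX"
  unfolding nwd_separable_def
proof (intro exI conjI allI)
  define D where "D = (\<lambda>n::nat. Free \<times> {qq (from_nat n)})"
  show "nowhere_dense_in XX (D n)" for n
    unfolding nowhere_dense_in_def
  proof
    show "D n \<subseteq> topspace XX" unfolding D_def topspace_XX by blast
    define q where "q = qq (from_nat n)"
    show "XX interior_of (XX closure_of (D n)) = {}"
    proof (rule ccontr)
      assume "XX interior_of (XX closure_of (D n)) \<noteq> {}"
      then obtain u c T where T: "openin XX T" "(u, c) \<in> T" "T \<subseteq> XX closure_of (D n)"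
        unfolding interior_of_def by auto
      obtain A l where Al: "A \<in> u" "c \<in> cyl l" "FO A \<times> cyl l \<subseteq> T"
        using box_basis[OF T(1,2)] by blast
      have "(u, c) \<in> topspace XX" using T openin_subset by blast
      then have uF: "u \<in> Free" using topspace_XX by blast
      then have uA: "u \<in> FO A" using Al(1) unfolding FO_def Free_def by simp
      define m where "m = length l"
      define c' where "c' = c(m := \<not> q m)"
      define l' where "l' = l @ [\<not> q m]"
      have c'cyl: "c' \<in> cyl l'"
        using Al(2) unfolding cyl_def c'_def l'_def m_def by (auto simp: nth_append less_Suc_eq)
      then have "c' \<in> cyl l" using cyl_snoc unfolding l'_def by blast
      then have "(u, c') \<in> XX closure_of (D n)" using Al(3) T(3) uA by blast
      moreover have "(u, c') \<in> FO A \<times> cyl l'" using uA c'cyl by blast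
      ultimately have "\<exists>y. y \<in> D n \<and> y \<in> FO A \<times> cyl l'"
        by (rule closure_pt[OF _ open_box[of A l']])
      then obtain y where "y \<in> D n" "y \<in> FO A \<times> cyl l'" by blast
      then have "q \<in> cyl l'" unfolding D_def q_def by auto
      then have all: "\<forall>i<length l'. q i = l' ! i" unfolding cyl_def by simp
      have ml: "m < length l'" unfolding l'_def m_def by simp
      have lm: "l' ! m = (\<not> q m)" unfolding l'_def m_def by (simp add: nth_append)
      have "q m = l' ! m" using all ml by blast
      then show False using lm by simp
    qed
  qed
  show "XX closure_of (\<Union>n. D n) = topspace XX"
  proof
    show "XX closure_of (\<Union>n. D n) \<subseteq> topspace XX" by (rule closure_of_subset_topspace)
    show "topspace XX \<subseteq> XX closure_of (\<Union>n. D n)"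
    proof
      fix p assume p: "p \<in> topspace XX"
      obtain u c where uc: "p = (u, c)" by (cases p)
      have uF: "u \<in> Free" using p uc topspace_XX by blast
      have "\<exists>y. y \<in> (\<Union>n. D n) \<and> y \<in> T" if h1: "(u, c) \<in> T" and h2: "openin XX T" for T
      proof -
        obtain A l where Al: "A \<in> u" "c \<in> cyl l" "FO A \<times> cyl l \<subseteq> T"
          using box_basis[OF h2 h1] by blast
        have "u \<in> FO A" using uF Al(1) unfolding FO_def Free_def by simp
        then have "(u, qq l) \<in> T" using Al(3) qq_cyl by blast
        moreover have "(u, qq l) \<in> D (to_nat l)" unfolding D_def using uF by simp
        ultimately show ?thesis by blast
      qed
      then show "p \<in> XX closure_of (\<Union>n. D n)" using p uc by (simp add: in_closure_of)
    qed
  qed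
qed

lemma part_not_d: "\<not> d_separable XX"
proof
  assume "d_separable XX"
  then obtain D :: "nat \<Rightarrow> (nat set set \<times> (nat \<Rightarrow> bool)) set" where
    disc: "\<And>n. discrete_subspace XX (D n)" and dense: "XX closure_of (\<Union>n. D n) = topspace XX"
    unfolding d_separable_def by blast
  have iso: "\<exists>T. openin XX T \<and> T \<inter> D n = {d}" if "d \<in> D n" for n d
  proof -
    have "subtopology XX (D n) = discrete_topology (D n)" using disc[of n] unfolding discrete_subspace_def by blast
    then have "openin (subtopology XX (D n)) {d}" using that by simp
    then obtain T where "openin XX T" "{d} = T \<inter> D n" unfolding openin_subtopology by blast
    then show ?thesis by blast
  qed
  define P where "P = (\<lambda>(n::nat, l::bool list). {u. \<exists>c. (u, c) \<in> D n \<and> c \<in> cyl l \<and>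
      (\<exists>C\<in>u. \<forall>u' c'. (u', c') \<in> D n \<and> u' \<in> FO C \<and> c' \<in> cyl l \<longrightarrow> u' = u \<and> c' = c)})"
  have small: "small (P k)" for k
    unfolding small_def
  proof (intro allI impI)
    fix A :: "nat set" assume A: "infinite A"
    obtain n l where k: "k = (n, l)" by (cases k)
    show "\<exists>B\<subseteq>A. infinite B \<and> FO B \<inter> P k = {}"
    proof (cases "FO A \<inter> P k = {}")
      case True then show ?thesis using A by blast
    next
      case False
      then obtain u where u: "u \<in> FO A" "u \<in> P k" by blast
      then obtain c C where cC: "(u, c) \<in> D n" "c \<in> cyl l" "C \<in> u"
        "\<And>u' c'. (u', c') \<in> D n \<Longrightarrow> u' \<in> FO C \<Longrightarrow> c' \<in> cyl l \<Longrightarrow> u' = u \<and> c' = c"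
        unfolding P_def k by auto
      have uu: "uf u" "free u" "A \<in> u" using u(1) unfolding FO_def by auto
      have "A \<inter> C \<in> u" using uf_int[OF uu(1) uu(3) cC(3)] .
      then have "infinite (A \<inter> C)" using uf_free_infinite[OF uu(1,2)] by blast
      then obtain B where B: "B \<subseteq> A \<inter> C" "infinite B" "B \<notin> u" using split_not_in[OF _ uu(1)] by blast
      have "FO B \<inter> P k = {}"
      proof (rule ccontr)
        assume "FO B \<inter> P k \<noteq> {}"
        then obtain u' where u': "u' \<in> FO B" "u' \<in> P k" by blast
        then obtain c' where c': "(u', c') \<in> D n" "c' \<in> cyl l" unfolding P_def k by auto
        have "u' \<in> FO C" using u'(1) FO_mono[of B C] B(1) by blast
        then have "u' = u" using cC(4)[OF c'(1) _ c'(2)] by blast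
        then show False using u'(1) B(3) unfolding FO_def by simp
      qed
      then show ?thesis using B by blast
    qed
  qed
  obtain B0 where B0: "infinite B0" "\<And>k. FO B0 \<inter> P (from_nat k) = {}"
    using small_union[of "\<lambda>k. P (from_nat k)"] small by blast
  obtain u0 where u0: "u0 \<in> FO B0" using FO_nonempty[OF B0(1)] by blast
  have "(u0, \<lambda>_. False) \<in> topspace XX" using u0 topspace_XX unfolding FO_def Free_def by simp
  then have "(u0, \<lambda>_. False) \<in> XX closure_of (\<Union>n. D n)" using dense by simp
  moreover have "openin XX (FO B0 \<times> UNIV)"
    using open_FO[of B0] by (simp add: openin_prod_Times_iff flip: topspace_cantor)
  moreover have "(u0, \<lambda>_. False) \<in> FO B0 \<times> UNIV" using u0 by simp
  ultimately have "\<exists>y. y \<in> (\<Union>n. D n) \<and> y \<in> FO B0 \<times> UNIV"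
    by (rule closure_pt)
  then obtain y where y: "y \<in> (\<Union>n. D n)" "y \<in> FO B0 \<times> UNIV" by blast
  then obtain n u c where ucn: "y = (u, c)" "(u, c) \<in> D n" "u \<in> FO B0" by (cases y) auto
  obtain T where T: "openin XX T" "T \<inter> D n = {(u, c)}" using iso[OF ucn(2)] by blast
  obtain C l where Cl: "C \<in> u" "c \<in> cyl l" "FO C \<times> cyl l \<subseteq> T"
    using box_basis[OF T(1)] T(2) by blast
  have "u \<in> P (n, l)"
    unfolding P_def
  proof (simp, intro exI conjI bexI[of _ C] allI impI)
    show "(u, c) \<in> D n" "c \<in> cyl l" "C \<in> u" using ucn Cl by auto
    fix u' c' assume h: "(u', c') \<in> D n \<and> u' \<in> FO C \<and> c' \<in> cyl l"
    then have "(u', c') \<in> T \<inter> D n" using Cl(3) by blast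
    then show "u' = u" "c' = c" using T(2) by auto
  qed
  then have "u \<in> FO B0 \<inter> P (from_nat (to_nat (n, l)))" using ucn(3) by simp
  then show False using B0(2) by blast
qed

theorem mainTheorem2:
  shows "compact_space (prod_topology omega_star cantor_space) \<and>
         nwd_separable (prod_topology omega_star cantor_space) \<and>
         \<not> d_separable (prod_topology omega_star cantor_space)"
  using part_compact part_nwd part_not_d by blast

end
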